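(* Let $\mathcal{Q}$ be a $d$-GMK instance with time horizon $T$, let $U=\{u_0,\ldots,u_k\}$ be a set of cut points of $T$, let $\mathcal{Q}_U=(q_j)_{j=0}^{k-1}$ be the cut instances of $\mathcal{Q}$ w.r.t. $U$, and for each $j$ let $(S_t,\mathcal{A}_t)_{t=u_j}^{u_{j+1}-1}$ be a feasible solution for $q_j$. Then the cut solution $(S_t,\mathcal{A}_t)_{t=1}^{T}$ is a feasible solution for $\mathcal{Q}$, and $f_{\mathcal{Q}}\left((S_t)_{t=1}^T\right)\ \geq\ \sum_{j=0}^{k-1} f_{q_j}\left((S_t)_{t=u_j}^{u_{j+1}-1}\right).$
   Context: A Multiple Knapsack Constraint (MKC) over an item set $I$ is $K=(w,B,W)$ with weights $w:I\to\mathbb{R}_+$, a set of bins $B$ and capacities $W:B\to\mathbb{R}_+$; an assignment $A:B\to 2^I$ is feasible if $\sum_{i\in A(b)}w(i)\le W(b)$ for every bin $b$, and it is an assignment of $S$ if $S=\cup_{b\in B}A(b)$. A $d$-MKCP instance is $(I,\mathcal{K},p)$ with $\mathcal{K}$ a tuple of $d$ MKCs and $p:I\to\mathbb{R}_{\ge0}$; a feasible solution is a set $S\subseteq I$ together with a tuple $\mathcal{A}$ of feasible assignments of $S$, one per MKC. A $d$-GMK instance is $\mathcal{Q}=((\mathcal{P}_t)_{t=1}^T,g^+,g^-,c^+,c^-)$, where $\mathcal{P}_t=(I,\mathcal{K}_t,p_t)$ is a $d_t$-MKCP instance ($d_t\le d$), $g^+,g^-\in\mathbb{R}_+^{I\times[2,T]}$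 are gains and $c^+,c^-\in\mathbb{R}_+^{I\times[1,T]}$ are change costs. A feasible solution is $(S_t,\mathcal{A}_t)_{t=1}^T$ with $(S_t,\mathcal{A}_t)$ feasible for $\mathcal{P}_t$; with $S_0=S_{T+1}=\emptyset$ its value is $f_{\mathcal{Q}}((S_t)_{t=1}^T)=\sum_{t=1}^T\sum_{i\in S_t}p_t(i)+\sum_{t=2}^T\big(\sum_{i\in S_{t-1}\cap S_t}g^+_{i,t}+\sum_{i\notin S_{t-1}\cup S_t}g^-_{i,t}\big)-\sum_{t=1}^T\big(\sum_{i\in S_t\setminus S_{t-1}}c^+_{i,t}+\sum_{i\in S_t\setminus S_{t+1}}c^-_{i,t}\big)$. A set of cut points of $T$ is $U=\{u_0,\ldots,u_k\}$ of integers with $u_j<u_{j+1}$, $u_0=1$, $u_k=T+1$. The cut instances of $\mathcal{Q}$ w.r.t. $U$ are $q_j=((\mathcal{P}_t)_{t=u_j}^{u_{j+1}-1},g^+,g^-,c^+,c^-)$ for $j=0,\ldots,k-1$, i.e. the sub-instance on the stage range $[u_j,u_{j+1}-1]$ without shifting or truncating the gain and cost vectors; when evaluating a solution of the sub-instance on range $[t_1,t_2]$ by the same formula restricted to that range, one assumes $S_{t_1-1}=S_{t_2+1}=\emptyset$ (so entry costs $c^+$ at $t_1$ and exit costs $c^-$ at $t_2$ are charged, and gains at $t_1$ are not counted). Given feasible solutions $(S_t,\mathcal{A}_t)_{t=u_j}^{u_{j+1}-1}$ for each cut instance $q_j$, the concatenation $(S_t,\mathcal{A}_t)_{t=1}^T$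 is called the cut solution for $\mathcal{Q}$. *)

theory Defs
  imports Complex_Main
begin

text \<open>A multiple knapsack constraint (MKC) K = (w, B, W): weights, bins, capacities.\<close>
type_synonym ('i, 'b) mkc = "('i \<Rightarrow> real) \<times> 'b set \<times> ('b \<Rightarrow> real)"

definition mkc_wf :: "'i set \<Rightarrow> ('i, 'b) mkc \<Rightarrow> bool" where
  "mkc_wf I K = (case K of (w, B, W) \<Rightarrow>
      finite B \<and> (\<forall>i\<in>I. w i \<ge> 0) \<and> (\<forall>b\<in>B. W b \<ge> 0))"

definition feasible_assignment :: "'i set \<Rightarrow> ('i, 'b) mkc \<Rightarrow> ('b \<Rightarrow> 'i set) \<Rightarrow> bool" where
  "feasible_assignment I K A = (case K of (w, B, W) \<Rightarrow>
      (\<forall>b\<in>B. A b \<subseteq> I \<and> sum w (A b) \<le> W b))"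

definition assignment_of :: "('i, 'b) mkc \<Rightarrow> ('b \<Rightarrow> 'i set) \<Rightarrow> 'i set \<Rightarrow> bool" where
  "assignment_of K A S = (case K of (w, B, W) \<Rightarrow> S = (\<Union>b\<in>B. A b))"

definition mkcp_feasible ::
  "'i set \<Rightarrow> ('i, 'b) mkc list \<Rightarrow> 'i set \<Rightarrow> ('b \<Rightarrow> 'i set) list \<Rightarrow> bool" where
  "mkcp_feasible I Ks S As =
     (S \<subseteq> I \<and> length As = length Ks \<and>
      (\<forall>m < length Ks. feasible_assignment I (Ks ! m) (As ! m)
                         \<and> assignment_of (Ks ! m) (As ! m) S))"

definition gmk_wf ::
  "'i set \<Rightarrow> nat \<Rightarrow> nat \<Rightarrow> (nat \<Rightarrow> ('i, 'b) mkc list) \<Rightarrow> (nat \<Rightarrow> 'i \<Rightarrow> real)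
   \<Rightarrow> ('i \<Rightarrow> nat \<Rightarrow> real) \<Rightarrow> ('i \<Rightarrow> nat \<Rightarrow> real)
   \<Rightarrow> ('i \<Rightarrow> nat \<Rightarrow> real) \<Rightarrow> ('i \<Rightarrow> nat \<Rightarrow> real) \<Rightarrow> bool" where
  "gmk_wf I d T Ks p gp gm cp cm =
     (finite I \<and>
      (\<forall>t\<in>{1..T}. length (Ks t) \<le> d \<and> (\<forall>K\<in>set (Ks t). mkc_wf I K)
                   \<and> (\<forall>i\<in>I. p t i \<ge> 0)) \<and>
      (\<forall>i\<in>I. \<forall>t\<in>{2..T}. gp i t \<ge> 0 \<and> gm i t \<ge> 0) \<and>
      (\<forall>i\<in>I. \<forall>t\<in>{1..T}. cp i t \<ge> 0 \<and> cm i t \<ge> 0))"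

text \<open>Value of a solution of the (sub-)instance on stage range [t1, t2], with
  S_{t1-1} = S_{t2+1} = {} (sets outside the range are treated as empty).
  For t1 = 1, t2 = T this is f_Q.\<close>
definition gmk_value ::
  "'i set \<Rightarrow> (nat \<Rightarrow> 'i \<Rightarrow> real)
   \<Rightarrow> ('i \<Rightarrow> nat \<Rightarrow> real) \<Rightarrow> ('i \<Rightarrow> nat \<Rightarrow> real)
   \<Rightarrow> ('i \<Rightarrow> nat \<Rightarrow> real) \<Rightarrow> ('i \<Rightarrow> nat \<Rightarrow> real)
   \<Rightarrow> nat \<Rightarrow> nat \<Rightarrow> (nat \<Rightarrow> 'i set) \<Rightarrow> real" where
  "gmk_value I p gp gm cp cm t1 t2 S =
     (let S' = (\<lambda>t. if t1 \<le> t \<and> t \<le> t2 then S t else {}) in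
       (\<Sum>t\<in>{t1..t2}. \<Sum>i\<in>S' t. p t i)
     + (\<Sum>t\<in>{Suc t1..t2}. (\<Sum>i\<in>S' (t - 1) \<inter> S' t. gp i t)
                           + (\<Sum>i\<in>I - (S' (t - 1) \<union> S' t). gm i t))
     - (\<Sum>t\<in>{t1..t2}. (\<Sum>i\<in>S' t - S' (t - 1). cp i t)
                       + (\<Sum>i\<in>S' t - S' (Suc t). cm i t)))"

definition cut_points :: "nat \<Rightarrow> (nat \<Rightarrow> nat) \<Rightarrow> nat \<Rightarrow> bool" where
  "cut_points T u k = (u 0 = 1 \<and> u k = T + 1 \<and> (\<forall>j<k. u j < u (Suc j)))"

end

theory Submission
  imports Defs
begin

lemma split_value:
  fixes I :: "'i set" and p :: "nat \<Rightarrow> 'i \<Rightarrow> real" and gp gm cp cm :: "'i \<Rightarrow> nat \<Rightarrow> real"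
  assumes fin: "finite I" and sub: "\<forall>t\<in>{a..c}. S t \<subseteq> I" and a1: "1 \<le> a" and ab: "a \<le> b" and bc: "b < c"
    and g0: "\<forall>i\<in>I. \<forall>t\<in>{Suc a..c}. gp i t \<ge> 0 \<and> gm i t \<ge> 0"
    and c0: "\<forall>i\<in>I. \<forall>t\<in>{a..c}. cp i t \<ge> 0 \<and> cm i t \<ge> 0"
  shows "gmk_value I p gp gm cp cm a c S \<ge> gmk_value I p gp gm cp cm a b S + gmk_value I p gp gm cp cm (Suc b) c S"
proof -
  define R where "R = (\<lambda>t. if a \<le> t \<and> t \<le> c then S t else {})"
  define R1 where "R1 = (\<lambda>t. if a \<le> t \<and> t \<le> b then S t else {})"
  define R2 where "R2 = (\<lambda>t. if Suc b \<le> t \<and> t \<le> c then S t else {})"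
  define P where "P = (\<lambda>X t. \<Sum>i\<in>X t. p t i)"
  define G where "G = (\<lambda>X t. (\<Sum>i\<in>X (t - 1) \<inter> X t. gp i t) + (\<Sum>i\<in>I - (X (t - 1) \<union> X t). gm i t))"
  define C where "C = (\<lambda>X t. (\<Sum>i\<in>X t - X (t - 1). cp i t) + (\<Sum>i\<in>X t - X (Suc t). cm i t))"
  have RI: "R t \<subseteq> I" for t using sub by (auto simp: R_def)
  have R1R: "R1 t \<subseteq> R t" for t using bc by (auto simp: R_def R1_def)
  have R2R: "R2 t \<subseteq> R t" for t using ab by (auto simp: R_def R2_def)
  have vc: "gmk_value I p gp gm cp cm a c S = sum (P R) {a..c} + sum (G R) {Suc a..c} - sum (C R) {a..c}"
    unfolding gmk_value_def Let_def R_def P_def G_def C_def by simp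
  have vb: "gmk_value I p gp gm cp cm a b S = sum (P R1) {a..b} + sum (G R1) {Suc a..b} - sum (C R1) {a..b}"
    unfolding gmk_value_def Let_def R1_def P_def G_def C_def by simp
  have vb2: "gmk_value I p gp gm cp cm (Suc b) c S = sum (P R2) {Suc b..c} + sum (G R2) {Suc (Suc b)..c} - sum (C R2) {Suc b..c}"
    unfolding gmk_value_def Let_def R2_def P_def G_def C_def by simp
  have split1: "{a..c} = {a..b} \<union> {Suc b..c}" using ab bc by auto
  have Peq: "sum (P R) {a..c} = sum (P R1) {a..b} + sum (P R2) {Suc b..c}"
  proof -
    have "sum (P R) {a..c} = sum (P R) {a..b} + sum (P R) {Suc b..c}"
      unfolding split1 by (rule sum.union_disjoint) auto
    also have "sum (P R) {a..b} = sum (P R1) {a..b}"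
      by (rule sum.cong) (use ab bc in \<open>auto simp: P_def R_def R1_def\<close>)
    also have "sum (P R) {Suc b..c} = sum (P R2) {Suc b..c}"
      by (rule sum.cong) (use ab bc in \<open>auto simp: P_def R_def R2_def\<close>)
    finally show ?thesis .
  qed
  have Gle: "sum (G R) {Suc a..c} \<ge> sum (G R1) {Suc a..b} + sum (G R2) {Suc (Suc b)..c}"
  proof -
    have split2: "{Suc a..c} = ({Suc a..b} \<union> {Suc (Suc b)..c}) \<union> {Suc b}" using ab bc by auto
    have "sum (G R) {Suc a..c} = sum (G R) ({Suc a..b} \<union> {Suc (Suc b)..c}) + G R (Suc b)"
      unfolding split2 by (subst sum.union_disjoint) auto
    also have "sum (G R) ({Suc a..b} \<union> {Suc (Suc b)..c}) = sum (G R) {Suc a..b} + sum (G R) {Suc (Suc b)..c}"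
      by (rule sum.union_disjoint) auto
    also have "sum (G R) {Suc a..b} = sum (G R1) {Suc a..b}"
      by (rule sum.cong) (use ab bc in \<open>auto simp: G_def R_def R1_def\<close>)
    also have "sum (G R) {Suc (Suc b)..c} = sum (G R2) {Suc (Suc b)..c}"
      by (rule sum.cong) (use ab bc in \<open>auto simp: G_def R_def R2_def\<close>)
    finally have e: "sum (G R) {Suc a..c} = sum (G R1) {Suc a..b} + sum (G R2) {Suc (Suc b)..c} + G R (Suc b)" .
    have sb: "Suc b \<in> {Suc a..c}" using ab bc by auto
    have "G R (Suc b) \<ge> 0" unfolding G_def
      using g0 sb RI by (intro add_nonneg_nonneg sum_nonneg) blast+
    then show ?thesis using e by linarith
  qed
  have Cmono: "C R t \<le> C X t" if "t \<in> {a..c}" "\<And>x. X x \<subseteq> R x" "X t = R t" for X t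
  proof -
    have XI: "X t \<subseteq> I" using RI that(3) by simp
    have "(\<Sum>i\<in>R t - R (t - 1). cp i t) \<le> (\<Sum>i\<in>X t - X (t - 1). cp i t)"
    proof (rule sum_mono2)
      show "finite (X t - X (t - 1))" using fin XI by (meson Diff_subset finite_subset subset_trans)
      show "R t - R (t - 1) \<subseteq> X t - X (t - 1)" using that(2,3) by blast
      show "\<And>i. i \<in> X t - X (t - 1) - (R t - R (t - 1)) \<Longrightarrow> 0 \<le> cp i t"
        using XI c0 that(1) by blast
    qed
    moreover have "(\<Sum>i\<in>R t - R (Suc t). cm i t) \<le> (\<Sum>i\<in>X t - X (Suc t). cm i t)"
    proof (rule sum_mono2)
      show "finite (X t - X (Suc t))" using fin XI by (meson Diff_subset finite_subset subset_trans)
      show "R t - R (Suc t) \<subseteq> X t - X (Suc t)" using that(2,3) by blast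
      show "\<And>i. i \<in> X t - X (Suc t) - (R t - R (Suc t)) \<Longrightarrow> 0 \<le> cm i t"
        using XI c0 that(1) by blast
    qed
    ultimately show ?thesis unfolding C_def by linarith
  qed
  have Cle: "sum (C R) {a..c} \<le> sum (C R1) {a..b} + sum (C R2) {Suc b..c}"
  proof -
    have "sum (C R) {a..c} = sum (C R) {a..b} + sum (C R) {Suc b..c}"
      unfolding split1 by (rule sum.union_disjoint) auto
    also have "sum (C R) {a..b} \<le> sum (C R1) {a..b}"
      by (rule sum_mono, rule Cmono) (use ab bc R1R in \<open>auto simp: R_def R1_def\<close>)
    also have "sum (C R) {Suc b..c} \<le> sum (C R2) {Suc b..c}"
      by (rule sum_mono, rule Cmono) (use ab bc R2R in \<open>auto simp: R_def R2_def\<close>)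
    finally show ?thesis by simp
  qed
  show ?thesis using vc vb vb2 Peq Gle Cle by linarith
qed

lemma value_empty: "gmk_value I p gp gm cp cm (Suc n) n S = 0"
  unfolding gmk_value_def Let_def by simp

theorem corollary13:
  fixes I :: "'i set" and d T k :: nat
    and Ks :: "nat \<Rightarrow> ('i, 'b) mkc list" and p :: "nat \<Rightarrow> 'i \<Rightarrow> real"
    and gp gm cp cm :: "'i \<Rightarrow> nat \<Rightarrow> real"
    and u :: "nat \<Rightarrow> nat"
    and S :: "nat \<Rightarrow> 'i set" and As :: "nat \<Rightarrow> ('b \<Rightarrow> 'i set) list"
  assumes "gmk_wf I d T Ks p gp gm cp cm"
    and "cut_points T u k"
    and "\<forall>j<k. \<forall>t\<in>{u j..u (Suc j) - 1}. mkcp_feasible I (Ks t) (S t) (As t)"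
  shows "(\<forall>t\<in>{1..T}. mkcp_feasible I (Ks t) (S t) (As t))
       \<and> gmk_value I p gp gm cp cm 1 T S
           \<ge> (\<Sum>j<k. gmk_value I p gp gm cp cm (u j) (u (Suc j) - 1) S)"
proof -
  have u0: "u 0 = 1" and uk: "u k = T + 1" and um: "\<And>j. j < k \<Longrightarrow> u j < u (Suc j)"
    using assms(2) unfolding cut_points_def by auto
  have umono: "u i \<le> u j" if "i \<le> j" "j \<le> k" for i j
    using that
  proof (induction j)
    case 0 then show ?case by simp
  next
    case (Suc j)
    then show ?case using um[of j] by (cases "i = Suc j") auto
  qed
  have cover: "\<exists>j<k. t \<in> {u j..u (Suc j) - 1}" if "t \<in> {u 0..<u m}" "m \<le> k" for t m
    using that
  proof (induction m)
    case 0 then show ?case by simp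
  next
    case (Suc m)
    show ?case
    proof (cases "t < u m")
      case True then show ?thesis using Suc by auto
    next
      case False then show ?thesis using Suc by (intro exI[of _ m]) auto
    qed
  qed
  have feas: "\<forall>t\<in>{1..T}. mkcp_feasible I (Ks t) (S t) (As t)"
  proof
    fix t assume "t \<in> {1..T}"
    then have "t \<in> {u 0..<u k}" using u0 uk by auto
    then obtain j where "j < k" "t \<in> {u j..u (Suc j) - 1}" using cover by blast
    then show "mkcp_feasible I (Ks t) (S t) (As t)" using assms(3) by blast
  qed
  have wf: "finite I" "\<forall>i\<in>I. \<forall>t\<in>{2..T}. gp i t \<ge> 0 \<and> gm i t \<ge> 0"
     "\<forall>i\<in>I. \<forall>t\<in>{1..T}. cp i t \<ge> 0 \<and> cm i t \<ge> 0"
    using assms(1) unfolding gmk_wf_def by auto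
  have subI: "\<forall>t\<in>{1..T}. S t \<subseteq> I" using feas unfolding mkcp_feasible_def by blast
  have main: "gmk_value I p gp gm cp cm 1 (u m - 1) S
           \<ge> (\<Sum>j<m. gmk_value I p gp gm cp cm (u j) (u (Suc j) - 1) S)" if "m \<le> k" for m
    using that
  proof (induction m)
    case 0 then show ?case using u0 value_empty[of I p gp gm cp cm 0 S] by simp
  next
    case (Suc m)
    have m: "m < k" using Suc by simp
    have um1: "u m \<ge> 1" using umono[of 0 m] u0 m by simp
    have lt: "u m < u (Suc m)" using um m by simp
    have le: "u (Suc m) \<le> T + 1" using umono[of "Suc m" k] uk Suc by simp
    have IH: "gmk_value I p gp gm cp cm 1 (u m - 1) S
           \<ge> (\<Sum>j<m. gmk_value I p gp gm cp cm (u j) (u (Suc j) - 1) S)" using Suc by simp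
    have sp: "gmk_value I p gp gm cp cm 1 (u (Suc m) - 1) S
        \<ge> gmk_value I p gp gm cp cm 1 (u m - 1) S + gmk_value I p gp gm cp cm (u m) (u (Suc m) - 1) S"
    proof (cases "u m = 1")
      case True
      then show ?thesis using value_empty[of I p gp gm cp cm 0 S] by simp
    next
      case False
      have e: "Suc (u m - 1) = u m" using um1 by simp
      have "gmk_value I p gp gm cp cm 1 (u (Suc m) - 1) S
        \<ge> gmk_value I p gp gm cp cm 1 (u m - 1) S + gmk_value I p gp gm cp cm (Suc (u m - 1)) (u (Suc m) - 1) S"
        apply (rule split_value)
        using wf subI False um1 lt le by auto
      then show ?thesis unfolding e .
    qed
    show ?case using IH sp by simp
  qed
  show ?thesis using feas main[of k] uk by simp
qed

end
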